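(* Let $U$ be a nonzero subspace of $\mathbb{F}_q^n$ and let $u$ be the minimum element of $U\setminus\{0\}$ with respect to the total order $\prec$ on $\mathbb{F}_q^n$. Then $u$ is the last row of the reduced row echelon form of a generator matrix of $U$.
   Context: Fix a total order $\prec$ on $\mathbb{F}_q$ such that $0\prec1\prec\alpha$ for all $\alpha\in\mathbb{F}_q\setminus\{0,1\}$, and extend it lexicographically to a total order $\prec$ on $\mathbb{F}_q^n$. The reduced row echelon form of a $k$-dimensional subspace is its unique $k\times n$ generator matrix in reduced row echelon form (the leading nonzero positions of the rows increase from top to bottom). *)

theory Defs
  imports Main
begin

text \<open>Vectors of F_q^n are represented as functions nat => 'a vanishing outside {0..<n};
  coordinate i (0-based) corresponds to position i+1 of the paper.\<close>

definition vecs :: "nat \<Rightarrow> (nat \<Rightarrow> 'a::zero) set" where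
  "vecs n = {x. \<forall>i\<ge>n. x i = 0}"

definition subspace :: "nat \<Rightarrow> (nat \<Rightarrow> 'a::field) set \<Rightarrow> bool" where
  "subspace n U \<longleftrightarrow> U \<subseteq> vecs n \<and> (\<lambda>_. 0) \<in> U
     \<and> (\<forall>x\<in>U. \<forall>y\<in>U. (\<lambda>i. x i + y i) \<in> U)
     \<and> (\<forall>c. \<forall>x\<in>U. (\<lambda>i. c * x i) \<in> U)"

definition field_order :: "('a::field \<Rightarrow> 'a \<Rightarrow> bool) \<Rightarrow> bool" where
  "field_order lt \<longleftrightarrow> (\<forall>x. \<not> lt x x) \<and> (\<forall>x y z. lt x y \<longrightarrow> lt y z \<longrightarrow> lt x z)
     \<and> (\<forall>x y. x \<noteq> y \<longrightarrow> lt x y \<or> lt y x)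
     \<and> lt 0 1 \<and> (\<forall>a. a \<noteq> 0 \<and> a \<noteq> 1 \<longrightarrow> lt 1 a)"

definition lex_less :: "nat \<Rightarrow> ('a \<Rightarrow> 'a \<Rightarrow> bool) \<Rightarrow> (nat \<Rightarrow> 'a) \<Rightarrow> (nat \<Rightarrow> 'a) \<Rightarrow> bool" where
  "lex_less n lt x y \<longleftrightarrow> (\<exists>i<n. (\<forall>j<i. x j = y j) \<and> lt (x i) (y i))"

definition lincomb :: "(nat \<Rightarrow> 'a::comm_ring_1) \<Rightarrow> (nat \<Rightarrow> 'a) list \<Rightarrow> nat \<Rightarrow> 'a" where
  "lincomb c M = (\<lambda>j. \<Sum>i<length M. c i * (M ! i) j)"

definition generator_matrix :: "nat \<Rightarrow> (nat \<Rightarrow> 'a::field) set \<Rightarrow> (nat \<Rightarrow> 'a) list \<Rightarrow> bool" where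
  "generator_matrix n U M \<longleftrightarrow> set M \<subseteq> vecs n
     \<and> U = {lincomb c M | c. True}
     \<and> (\<forall>c. lincomb c M = (\<lambda>_. 0) \<longrightarrow> (\<forall>i<length M. c i = 0))"

definition pivot :: "(nat \<Rightarrow> 'a::zero) \<Rightarrow> nat" where
  "pivot x = (LEAST i. x i \<noteq> 0)"

definition is_rref :: "(nat \<Rightarrow> 'a::field) list \<Rightarrow> bool" where
  "is_rref M \<longleftrightarrow> (\<forall>r\<in>set M. r \<noteq> (\<lambda>_. 0))
     \<and> (\<forall>i j. i < j \<and> j < length M \<longrightarrow> pivot (M ! i) < pivot (M ! j))
     \<and> (\<forall>i<length M. (M ! i) (pivot (M ! i)) = 1)
     \<and> (\<forall>i<length M. \<forall>j<length M. i \<noteq> j \<longrightarrow> (M ! j) (pivot (M ! i)) = 0)"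

definition rref_of :: "nat \<Rightarrow> (nat \<Rightarrow> 'a::field) set \<Rightarrow> (nat \<Rightarrow> 'a) list \<Rightarrow> bool" where
  "rref_of n U M \<longleftrightarrow> generator_matrix n U M \<and> is_rref M"

end

theory Submission
  imports Defs
begin

lemma subspace_vecs: "subspace n U \<Longrightarrow> U \<subseteq> vecs n"
  unfolding subspace_def by blast
lemma subspace_zero: "subspace n U \<Longrightarrow> (\<lambda>_. 0) \<in> U"
  unfolding subspace_def by blast
lemma subspace_add: "subspace n U \<Longrightarrow> x \<in> U \<Longrightarrow> y \<in> U \<Longrightarrow> (\<lambda>i. x i + y i) \<in> U"
  unfolding subspace_def by blast
lemma subspace_smult: "subspace n U \<Longrightarrow> x \<in> U \<Longrightarrow> (\<lambda>i. c * x i) \<in> U"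
  unfolding subspace_def by blast

lemma lincomb_Nil: "lincomb c [] = (\<lambda>_. 0)"
  by (simp add: lincomb_def)

lemma lincomb_Cons: "lincomb c (x#M) = (\<lambda>j. c 0 * x j + lincomb (\<lambda>i. c (Suc i)) M j)"
  unfolding lincomb_def by (simp only: length_Cons sum.lessThan_Suc_shift nth_Cons_0 nth_Cons_Suc)

lemma lincomb_mem:
  assumes "subspace n U" "set M \<subseteq> U"
  shows "lincomb c M \<in> U"
  using assms(2)
proof (induction M arbitrary: c)
  case Nil
  then show ?case using subspace_zero[OF assms(1)] by (simp add: lincomb_Nil)
next
  case (Cons x M)
  have "lincomb (\<lambda>i. c (Suc i)) M \<in> U" using Cons by auto
  moreover have "(\<lambda>j. c 0 * x j) \<in> U" using Cons subspace_smult[OF assms(1)] by simp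
  ultimately show ?case using subspace_add[OF assms(1)] unfolding lincomb_Cons by blast
qed

lemma row_lincomb:
  assumes "i < length M"
  shows "lincomb (\<lambda>j. if j = i then 1 else 0) M = M ! i"
proof
  fix j
  have "lincomb (\<lambda>j. if j = i then 1 else 0) M j = (\<Sum>k<length M. if k = i then (M ! k) j else 0)"
    unfolding lincomb_def by (intro sum.cong) auto
  also have "\<dots> = (M ! i) j" using assms by simp
  finally show "lincomb (\<lambda>j. if j = i then 1 else 0) M j = (M ! i) j" .
qed

lemma pivot_nz: "x \<noteq> (\<lambda>_. 0) \<Longrightarrow> x (pivot x) \<noteq> 0"
  unfolding pivot_def by (rule LeastI_ex) auto

lemma before_pivot: "j < pivot x \<Longrightarrow> x j = 0"
  unfolding pivot_def using not_less_Least by blast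

lemma pivot_lt:
  assumes "x \<in> vecs n" "x \<noteq> (\<lambda>_. 0)" shows "pivot x < n"
proof (rule ccontr)
  assume "\<not> pivot x < n"
  then have "x (pivot x) = 0" using assms(1) unfolding vecs_def by simp
  then show False using pivot_nz[OF assms(2)] by simp
qed

lemma rref_eval:
  assumes "is_rref M" "i < length M"
  shows "lincomb c M (pivot (M ! i)) = c i"
proof -
  have "\<And>j. j < length M \<Longrightarrow> (M ! j) (pivot (M ! i)) = (if j = i then 1 else 0)"
    using assms unfolding is_rref_def by auto
  then have "lincomb c M (pivot (M ! i)) = (\<Sum>j<length M. if j = i then c j else 0)"
    unfolding lincomb_def by (intro sum.cong) auto
  also have "\<dots> = c i" using assms(2) by simp
  finally show ?thesis .
qed

lemma rref_indep:
  assumes "is_rref M" "lincomb c M = (\<lambda>_. 0)" "i < length M"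
  shows "c i = 0"
  using rref_eval[OF assms(1,3), of c] assms(2) by simp

lemma subspace_restrict:
  assumes "subspace n U"
  shows "subspace n {v\<in>U. \<forall>i<k. v i = 0}"
  unfolding subspace_def
proof (intro conjI ballI allI)
  show "{v \<in> U. \<forall>i<k. v i = 0} \<subseteq> vecs n" using subspace_vecs[OF assms] by blast
  show "(\<lambda>_. 0) \<in> {v \<in> U. \<forall>i<k. v i = 0}" using subspace_zero[OF assms] by simp
  fix x y assume "x \<in> {v \<in> U. \<forall>i<k. v i = 0}" "y \<in> {v \<in> U. \<forall>i<k. v i = 0}"
  then show "(\<lambda>i. x i + y i) \<in> {v \<in> U. \<forall>i<k. v i = 0}" using subspace_add[OF assms] by simp
next
  fix c x assume "x \<in> {v \<in> U. \<forall>i<k. v i = 0}"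
  then show "(\<lambda>i. c * x i) \<in> {v \<in> U. \<forall>i<k. v i = 0}" using subspace_smult[OF assms] by simp
qed

lemma is_rref_Cons:
  assumes "is_rref M" "x \<noteq> (\<lambda>_. 0)" "\<forall>r\<in>set M. pivot x < pivot r"
    "x (pivot x) = 1" "\<forall>r\<in>set M. r (pivot x) = 0" "\<forall>r\<in>set M. x (pivot r) = 0"
  shows "is_rref (x#M)"
  unfolding is_rref_def
proof (intro conjI allI impI)
  show "\<forall>r\<in>set (x # M). r \<noteq> (\<lambda>_. 0)" using assms unfolding is_rref_def by auto
next
  fix i j assume a: "i < j \<and> j < length (x # M)"
  then obtain j' where j: "j = Suc j'" "j' < length M" by (cases j) auto
  show "pivot ((x # M) ! i) < pivot ((x # M) ! j)"
  proof (cases i)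
    case 0 then show ?thesis using j assms(3) by simp
  next
    case (Suc i') then show ?thesis using j a assms(1) unfolding is_rref_def by auto
  qed
next
  fix i assume "i < length (x # M)"
  then show "((x # M) ! i) (pivot ((x # M) ! i)) = 1"
    using assms(1,4) unfolding is_rref_def by (cases i) auto
next
  fix i j assume a: "i < length (x # M)" "j < length (x # M)" "i \<noteq> j"
  show "((x # M) ! j) (pivot ((x # M) ! i)) = 0"
  proof (cases i)
    case 0 then obtain j' where "j = Suc j'" "j' < length M" using a by (cases j) auto
    then show ?thesis using 0 assms(5) by simp
  next
    case (Suc i')
    show ?thesis
    proof (cases j)
      case 0 then show ?thesis using Suc a assms(6) by simp
    next
      case (Suc j') then show ?thesis using \<open>i = Suc i'\<close> a assms(1) unfolding is_rref_def by auto
    qed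
  qed
qed

lemma rref_exists:
  assumes sub: "subspace n U"
  shows "\<exists>M. rref_of n U M"
proof -
  define V where "V k = {v\<in>U. \<forall>i<k. v i = 0}" for k
  have subV: "subspace n (V k)" for k using subspace_restrict[OF sub] V_def by simp
  have "\<exists>M. rref_of n (V k) M" if "k \<le> n" for k
    using that
  proof (induction k rule: inc_induct)
    case base
    have "V n = {\<lambda>_. 0}"
    proof (intro equalityI subsetI)
      fix v assume v: "v \<in> V n"
      then have vU: "v \<in> U" "\<forall>i<n. v i = 0" unfolding V_def by simp_all
      then have "v \<in> vecs n" "\<forall>i<n. v i = 0" using subspace_vecs[OF sub] by blast+
      then have "v = (\<lambda>_. 0)"
      proof (intro ext)
        fix i
        show "v i = 0"
        proof (cases "i < n")
          case True then show ?thesis using vU by simp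
        next
          case False then show ?thesis using \<open>v \<in> vecs n\<close> unfolding vecs_def by simp
        qed
      qed
      then show "v \<in> {\<lambda>_. 0}" by simp
    next
      fix v :: "nat \<Rightarrow> 'a" assume "v \<in> {\<lambda>_. 0}"
      then show "v \<in> V n" using subspace_zero[OF sub] unfolding V_def by auto
    qed
    then have "rref_of n (V n) []" unfolding rref_of_def generator_matrix_def is_rref_def
      by (simp add: lincomb_Nil)
    then show ?case by blast
  next
    case (step k)
    then obtain M where M: "rref_of n (V (Suc k)) M" by blast
    have gen: "V (Suc k) = {lincomb c M | c. True}" and rr: "is_rref M" and Mv: "set M \<subseteq> vecs n"
      using M unfolding rref_of_def generator_matrix_def by auto
    have rowsV: "set M \<subseteq> V (Suc k)"
    proof
      fix r assume "r \<in> set M"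
      then obtain i where "i < length M" "r = M!i" by (metis in_set_conv_nth)
      then have "r = lincomb (\<lambda>j. if j = i then 1 else 0) M" using row_lincomb by metis
      then show "r \<in> V (Suc k)" using gen by blast
    qed
    have VS: "V (Suc k) \<subseteq> V k" unfolding V_def by auto
    show ?case
    proof (cases "\<forall>v\<in>V k. v k = 0")
      case True
      then have "V k = V (Suc k)" unfolding V_def using less_Suc_eq by auto
      then show ?thesis using M by auto
    next
      case False
      then obtain w where w: "w \<in> V k" "w k \<noteq> 0" by auto
      define w1 where "w1 = (\<lambda>i. inverse (w k) * w i)"
      have w1: "w1 \<in> V k" "w1 k = 1" using subspace_smult[OF subV[of k] w(1)] w unfolding w1_def by auto
      define c where "c = (\<lambda>j. w1 (pivot (M ! j)))"
      define w' where "w' = (\<lambda>i. w1 i + (-1) * lincomb c M i)"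
      have lcV: "lincomb c M \<in> V (Suc k)" using lincomb_mem[OF subV rowsV] .
      have "(\<lambda>i. (-1) * lincomb c M i) \<in> V k" using subspace_smult[OF subV[of k]] lcV VS by blast
      then have w'V: "w' \<in> V k" using subspace_add[OF subV[of k]] w1 unfolding w'_def by blast
      have lck: "lincomb c M k = 0" using lcV unfolding V_def by auto
      have w'k: "w' k = 1" using lck w1 unfolding w'_def by simp
      have w'lt: "w' i = 0" if "i < k" for i using w'V that unfolding V_def by auto
      have pw': "pivot w' = k" unfolding pivot_def
      proof (rule Least_equality)
        show "w' k \<noteq> 0" using w'k by simp
      next
        fix y assume "w' y \<noteq> 0" then show "k \<le> y" using w'lt not_less by blast
      qed
      have w'nz: "w' \<noteq> (\<lambda>_. 0)"
      proof
        assume "w' = (\<lambda>_. 0)"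
        then have "w' k = 0" by simp
        then show False using w'k by simp
      qed
      have rowk: "r i = 0" if "r \<in> set M" "i \<le> k" for r i
      proof -
        have "r \<in> V (Suc k)" using rowsV that(1) by blast
        then have "\<forall>i<Suc k. r i = 0" unfolding V_def by blast
        moreover have "i < Suc k" using that(2) by simp
        ultimately show ?thesis by blast
      qed
      have rownz: "r \<noteq> (\<lambda>_. 0)" if "r \<in> set M" for r using rr that unfolding is_rref_def by blast
      have prow: "k < pivot r" if "r \<in> set M" for r
      proof (rule ccontr)
        assume "\<not> k < pivot r"
        then have "pivot r \<le> k" by simp
        then have "r (pivot r) = 0" using rowk[OF that] by blast
        then show False using pivot_nz[OF rownz[OF that]] by simp
      qed
      have w'piv: "w' (pivot r) = 0" if "r \<in> set M" for r
      proof -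
        from that obtain j where j: "j < length M" "r = M ! j" by (auto simp: in_set_conv_nth)
        have "lincomb c M (pivot r) = c j" unfolding j(2) by (rule rref_eval[OF rr j(1)])
        also have "c j = w1 (pivot r)" unfolding c_def using j(2) by simp
        finally have "lincomb c M (pivot r) = w1 (pivot r)" .
        then show ?thesis unfolding w'_def by simp
      qed
      have rr': "is_rref (w' # M)"
      proof (rule is_rref_Cons[OF rr w'nz])
        show "\<forall>r\<in>set M. pivot w' < pivot r" using pw' prow by simp
        show "w' (pivot w') = 1" using pw' w'k by simp
        show "\<forall>r\<in>set M. r (pivot w') = 0" using pw' rowk by simp
        show "\<forall>r\<in>set M. w' (pivot r) = 0" using w'piv by blast
      qed
      have gen': "V k = {lincomb d (w' # M) | d. True}"
      proof (intro equalityI subsetI)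
        fix v assume v: "v \<in> V k"
        define z where "z = (\<lambda>i. v i + (- v k) * w' i)"
        have "(\<lambda>i. (- v k) * w' i) \<in> V k" using subspace_smult[OF subV[of k]] w'V by blast
        then have "z \<in> V k" using subspace_add[OF subV[of k]] v unfolding z_def by blast
        moreover have "z k = 0" unfolding z_def using w'k by simp
        ultimately have "z \<in> V (Suc k)" unfolding V_def using less_Suc_eq by auto
        then obtain d where d: "z = lincomb d M" using gen by auto
        have "lincomb (\<lambda>i. if i = 0 then v k else d (i - 1)) (w' # M) = (\<lambda>j. v k * w' j + lincomb d M j)"
          by (simp add: lincomb_Cons)
        also have "\<dots> = v" unfolding d[symmetric] z_def by (simp add: fun_eq_iff)
        finally have "v = lincomb (\<lambda>i. if i = 0 then v k else d (i - 1)) (w' # M)" by (rule sym)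
        then show "v \<in> {lincomb d (w' # M) | d. True}" by blast
      next
        fix v assume "v \<in> {lincomb d (w' # M) | d. True}"
        then obtain d where "v = lincomb d (w' # M)" by blast
        moreover have "set (w' # M) \<subseteq> V k" using w'V rowsV VS by auto
        ultimately show "v \<in> V k" using lincomb_mem[OF subV] by blast
      qed
      have "set (w' # M) \<subseteq> vecs n" using Mv w'V subspace_vecs[OF sub] unfolding V_def by auto
      then have "rref_of n (V k) (w' # M)"
        unfolding rref_of_def generator_matrix_def using gen' rr' rref_indep[OF rr'] by blast
      then show ?thesis by blast
    qed
  qed
  moreover have "V 0 = U" unfolding V_def by simp
  ultimately show ?thesis by force
qed

lemma fo_irrefl: "field_order lt \<Longrightarrow> \<not> lt a a"
  unfolding field_order_def by blast
lemma fo_trans: "field_order lt \<Longrightarrow> lt a b \<Longrightarrow> lt b c \<Longrightarrow> lt a c"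
  unfolding field_order_def by blast
lemma fo_01: "field_order lt \<Longrightarrow> lt 0 1"
  unfolding field_order_def by blast
lemma fo_1: "field_order lt \<Longrightarrow> a \<noteq> 0 \<Longrightarrow> a \<noteq> 1 \<Longrightarrow> lt 1 a"
  unfolding field_order_def by blast
lemma fo_0: "field_order lt \<Longrightarrow> a \<noteq> 0 \<Longrightarrow> lt 0 a"
proof (cases "a = 1")
  case True
  assume "field_order lt" then show ?thesis using True fo_01 by simp
next
  case False
  assume "field_order lt" "a \<noteq> 0"
  then show ?thesis using False fo_01 fo_1 fo_trans by metis
qed

lemma lex_asym:
  assumes fo: "field_order lt" and xy: "lex_less n lt x y" and yx: "lex_less n lt y x"
  shows False
proof -
  obtain i where i: "i < n" "\<forall>j<i. x j = y j" "lt (x i) (y i)" using xy unfolding lex_less_def by blast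
  obtain i' where i': "i' < n" "\<forall>j<i'. y j = x j" "lt (y i') (x i')" using yx unfolding lex_less_def by blast
  consider "i < i'" | "i' < i" | "i = i'" by linarith
  then show False
  proof cases
    case 1
    then have "y i = x i" using i'(2) by blast
    then show False using i(3) fo_irrefl[OF fo] by simp
  next
    case 2
    then have "x i' = y i'" using i(2) by blast
    then show False using i'(3) fo_irrefl[OF fo] by simp
  next
    case 3
    then have "lt (x i) (x i)" using fo_trans[OF fo i(3)] i'(3) by simp
    then show False using fo_irrefl[OF fo] by simp
  qed
qed

lemma rref_last_min:
  assumes fo: "field_order lt" and R: "rref_of n U M" and Mne: "M \<noteq> []"
    and v: "v \<in> U" "v \<noteq> (\<lambda>_. 0)" "v \<noteq> last M"
  shows "lex_less n lt (last M) v"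
proof -
  have gen: "U = {lincomb c M | c. True}" and rr: "is_rref M" and Mv: "set M \<subseteq> vecs n"
    using R unfolding rref_of_def generator_matrix_def by blast+
  obtain c where vc: "v = lincomb c M" using v(1) gen by blast
  define m where "m = length M"
  have m1: "m \<ge> 1" using Mne unfolding m_def by (cases M) auto
  have ex: "\<exists>i. i < m \<and> c i \<noteq> 0"
  proof (rule ccontr)
    assume "\<not> (\<exists>i. i < m \<and> c i \<noteq> 0)"
    then have cz: "\<forall>i<m. c i = 0" by blast
    have "v = (\<lambda>_. 0)"
    proof (intro ext)
      fix j
      show "v j = 0" unfolding vc lincomb_def
        by (intro sum.neutral) (simp add: cz m_def)
    qed
    with v(2) show False by simp
  qed
  define k where "k = (LEAST i. i < m \<and> c i \<noteq> 0)"
  have k: "k < m" "c k \<noteq> 0" using LeastI_ex[OF ex] unfolding k_def by blast+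
  have kmin: "c i = 0" if ik: "i < k" for i
  proof (rule ccontr)
    assume "c i \<noteq> 0"
    moreover have "i < m" using ik k by simp
    ultimately have "k \<le> i" unfolding k_def by (intro Least_le) simp
    with ik show False by simp
  qed
  define q where "q = pivot (M ! k)"
  have piv_mono: "pivot (M!k) < pivot (M!i)" if "k < i" "i < m" for i
    using rr that unfolding is_rref_def m_def by blast
  have v0: "v j = 0" if jq: "j < q" for j
  proof -
    have term0: "c i * (M ! i) j = 0" if im: "i < m" for i
    proof (cases "i < k")
      case True then show ?thesis using kmin by simp
    next
      case False
      have "q \<le> pivot (M!i)"
      proof (cases "i = k")
        case True then show ?thesis unfolding q_def by simp
      next
        case False
        then have "k < i" using \<open>\<not> i < k\<close> by simp
        then show ?thesis using piv_mono[OF _ im] unfolding q_def by simp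
      qed
      then have "j < pivot (M ! i)" using jq by simp
      then have "(M ! i) j = 0" by (rule before_pivot)
      then show ?thesis by simp
    qed
    show ?thesis unfolding vc lincomb_def
      by (intro sum.neutral) (simp add: term0 m_def)
  qed
  have vq: "v q = c k" unfolding vc q_def using rref_eval[OF rr] k(1) m_def by simp
  have Mk_nz: "M ! k \<noteq> (\<lambda>_. 0)" using rr k(1) unfolding is_rref_def m_def by simp
  have Mk_v: "M ! k \<in> vecs n" using Mv k(1) unfolding m_def by auto
  have qn: "q < n" unfolding q_def by (rule pivot_lt[OF Mk_v Mk_nz])
  have L: "last M = M ! (m - 1)" using Mne last_conv_nth m_def by simp
  define p where "p = pivot (last M)"
  have Lp: "last M p = 1" using rr m1 unfolding is_rref_def p_def L m_def by simp
  have L0: "last M j = 0" if "j < p" for j using that before_pivot unfolding p_def by blast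
  show ?thesis
  proof (cases "k < m - 1")
    case True
    then have qp: "q < p" using piv_mono[of "m - 1"] m1 unfolding q_def p_def L by simp
    show ?thesis unfolding lex_less_def
    proof (intro exI conjI allI impI)
      show "q < n" by (rule qn)
      fix j assume "j < q"
      then show "last M j = v j" using L0 v0 qp by simp
    next
      have "last M q = 0" using L0 qp by simp
      then show "lt (last M q) (v q)" using vq fo_0[OF fo k(2)] by simp
    qed
  next
    case False
    then have km: "k = m - 1" using k by simp
    then have qp: "q = p" unfolding q_def p_def L by simp
    have vL: "v = (\<lambda>j. c k * last M j)"
    proof (intro ext)
      fix j
      have mS: "m = Suc k" using km m1 by simp
      have "v j = (\<Sum>i<Suc k. c i * (M ! i) j)" unfolding vc lincomb_def m_def[symmetric] mS ..
      also have "\<dots> = (\<Sum>i<k. c i * (M ! i) j) + c k * (M ! k) j" by simp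
      also have "(\<Sum>i<k. c i * (M ! i) j) = 0" by (intro sum.neutral) (simp add: kmin)
      finally show "v j = c k * last M j" using L km by simp
    qed
    have "c k \<noteq> 1"
    proof
      assume "c k = 1"
      then have "v = last M" using vL by simp
      with v(3) show False by simp
    qed
    then have lt1: "lt 1 (c k)" using fo_1[OF fo k(2)] by simp
    show ?thesis unfolding lex_less_def
    proof (intro exI conjI allI impI)
      show "q < n" by (rule qn)
      fix j assume "j < q"
      then show "last M j = v j" using L0 v0 qp by simp
    next
      show "lt (last M q) (v q)" using vq Lp qp lt1 by simp
    qed
  qed
qed

theorem lemma5p3:
  fixes lt :: "'a::{field,finite} \<Rightarrow> 'a \<Rightarrow> bool"
    and n :: nat and U :: "(nat \<Rightarrow> 'a) set" and u :: "nat \<Rightarrow> 'a"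
  assumes "field_order lt"
    and "subspace n U"
    and "U \<noteq> {\<lambda>_. 0}"
    and "u \<in> U" and "u \<noteq> (\<lambda>_. 0)"
    and "\<forall>v\<in>U. v \<noteq> (\<lambda>_. 0) \<and> v \<noteq> u \<longrightarrow> lex_less n lt u v"
  shows "(\<exists>M. rref_of n U M) \<and> (\<forall>M. rref_of n U M \<longrightarrow> M \<noteq> [] \<and> last M = u)"
proof (intro conjI allI impI)
  show "\<exists>M. rref_of n U M" by (rule rref_exists[OF assms(2)])
next
  fix M assume R: "rref_of n U M"
  have gen: "U = {lincomb c M | c. True}" and rr: "is_rref M"
    using R unfolding rref_of_def generator_matrix_def by blast+
  show Mne: "M \<noteq> []"
  proof
    assume "M = []"
    then have "U = {\<lambda>_. 0}" using gen by (simp add: lincomb_Nil)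
    with assms(3) show False by simp
  qed
  show "last M = u"
  proof (rule ccontr)
    assume ne: "last M \<noteq> u"
    have ln: "last M = M ! (length M - 1)" using Mne last_conv_nth by blast
    have idx: "length M - 1 < length M" using Mne by simp
    have "last M = lincomb (\<lambda>j. if j = length M - 1 then 1 else 0) M"
      using row_lincomb[OF idx] ln by simp
    then have LU: "last M \<in> U" using gen by blast
    have Lnz: "last M \<noteq> (\<lambda>_. 0)" using rr Mne unfolding is_rref_def by simp
    have "lex_less n lt u (last M)" using assms(6) LU Lnz ne by metis
    moreover have "lex_less n lt (last M) u"
      by (rule rref_last_min[OF assms(1) R Mne assms(4,5)]) (use ne in simp)
    ultimately show False using lex_asym[OF assms(1)] by blast
  qed
qed

end
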